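(* Let $n\ge1$, let $X$ be a discrete random variable with exactly $K\ge1$ mass points in $[0,1]$, let $P_Y$ be its output distribution through the binomial channel with $n$ trials, and let $P_{Y_r}$ be the Beta-binomial reference output. Suppose $\chi^2(P_Y\|P_{Y_r})\le u_n$ for some $u_n\in(0,1/4)$, and set $\alpha_n:=\log\frac{1}{4u_n}$. Then at least one of the following holds: \[ K>\frac{n+2}{4}\qquad\text{or}\qquad K\ge\frac{4-\alpha_n+\sqrt{\alpha_n(4n+\alpha_n+4)}}{8}. \] Consequently, if for a sequence of such situations (indexed by $n$) one has $\alpha_n\to\infty$, then $K/\sqrt n\to\infty$; and if moreover $\alpha_n=o(n)$, then $K\ge \frac14\sqrt{n\alpha_n}\,(1+o(1))=\frac14\sqrt{n\log\frac{1}{4u_n}}\,(1+o(1))$.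
   Context: All logarithms are natural. For an integer $n\ge1$, the binomial channel has input $X\in[0,1]$, output $Y\in\{0,\dots,n\}$ and transition law $P_{Y|X}(y|x)=\binom{n}{y}x^y(1-x)^{n-y}$. The reference input is $X_r\sim\mathrm{Beta}(1/2,1/2)$ with induced Beta-binomial output $P_{Y_r}(y)=\frac{\Gamma(y+1/2)\Gamma(n-y+1/2)}{\pi\,\Gamma(y+1)\Gamma(n-y+1)}$, $y=0,\dots,n$. $\chi^2(P\|Q)=\sum_y \frac{(P(y)-Q(y))^2}{Q(y)}$. *)

theory Defs
  imports "HOL-Analysis.Analysis" "HOL-Library.Landau_Symbols"
begin

definition discrete_input :: "real set \<Rightarrow> (real \<Rightarrow> real) \<Rightarrow> nat \<Rightarrow> bool" where
  "discrete_input S w K \<longleftrightarrow> finite S \<and> S \<subseteq> {0..1} \<and> card S = K \<and>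
     (\<forall>x\<in>S. w x > 0) \<and> (\<Sum>x\<in>S. w x) = 1"

definition binom_out :: "nat \<Rightarrow> real set \<Rightarrow> (real \<Rightarrow> real) \<Rightarrow> nat \<Rightarrow> real" where
  "binom_out n S w y = (\<Sum>x\<in>S. w x * (real (n choose y) * x ^ y * (1 - x) ^ (n - y)))"

text \<open>Beta-binomial reference output (input Beta(1/2,1/2)).\<close>
definition ref_out :: "nat \<Rightarrow> nat \<Rightarrow> real" where
  "ref_out n y = Gamma (real y + 1/2) * Gamma (real (n - y) + 1/2) /
                 (pi * Gamma (real y + 1) * Gamma (real (n - y) + 1))"

definition chi2 :: "nat \<Rightarrow> (nat \<Rightarrow> real) \<Rightarrow> (nat \<Rightarrow> real) \<Rightarrow> real" where
  "chi2 n P Q = (\<Sum>y\<in>{0..n}. (P y - Q y)^2 / Q y)"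

end

theory Submission
  imports Defs
begin


definition xth :: "real \<Rightarrow> real" where "xth t = (1 - cos t) / 2"
definition Enu :: "(real \<Rightarrow> real) \<Rightarrow> real" where
  "Enu g = integral {0..pi} (\<lambda>t. g (xth t)) / pi"

lemma xth_ge0: "0 \<le> xth t" and xth_le1: "xth t \<le> 1"
  unfolding xth_def using cos_ge_minus_one[of t] cos_le_one[of t] by auto

lemma one_minus_2xth: "1 - 2 * xth t = cos t"
  unfolding xth_def by (simp add: field_simps)

lemma cont_xth: "continuous_on UNIV (g::real\<Rightarrow>real) \<Longrightarrow> continuous_on {0..pi} (\<lambda>t. g (xth t))"
  unfolding xth_def
  by (rule continuous_on_compose2[of UNIV g]) (auto intro!: continuous_intros)

lemma int_xth: fixes g :: "real \<Rightarrow> real" assumes "continuous_on UNIV g" shows "(\<lambda>t. g (xth t)) integrable_on {0..pi}"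
  using cont_xth[OF assms] by (rule integrable_continuous_interval)

lemma Enu_add: "continuous_on UNIV f \<Longrightarrow> continuous_on UNIV g \<Longrightarrow>
   Enu (\<lambda>x. f x + g x) = Enu f + Enu g"
  unfolding Enu_def by (simp add: integral_add int_xth add_divide_distrib)

lemma Enu_diff: "continuous_on UNIV f \<Longrightarrow> continuous_on UNIV g \<Longrightarrow>
   Enu (\<lambda>x. f x - g x) = Enu f - Enu g"
  unfolding Enu_def by (simp add: integral_diff int_xth diff_divide_distrib)

lemma Enu_cmult: "Enu (\<lambda>x. c * f x) = c * Enu f"
  unfolding Enu_def by simp

lemma Enu_sum: "finite A \<Longrightarrow> (\<And>i. i \<in> A \<Longrightarrow> continuous_on UNIV (f i)) \<Longrightarrow>
   Enu (\<lambda>x. \<Sum>i\<in>A. f i x) = (\<Sum>i\<in>A. Enu (f i))"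
  unfolding Enu_def
  by (simp add: integral_sum int_xth flip: sum_divide_distrib)

lemma Enu_cong: "(\<And>x. 0 \<le> x \<Longrightarrow> x \<le> 1 \<Longrightarrow> f x = g x) \<Longrightarrow> Enu f = Enu g"
  unfolding Enu_def using xth_ge0 xth_le1 by simp

definition low :: "nat \<Rightarrow> (real \<Rightarrow> real) \<Rightarrow> bool" where
  "low j p \<longleftrightarrow> (\<exists>c. \<forall>x. p x = (\<Sum>i<j. c i * x ^ i))"

lemma low_zero: "low j (\<lambda>x. 0)"
  unfolding low_def by (rule exI[of _ "\<lambda>i. 0"]) simp

lemma low_add: "low j p \<Longrightarrow> low j q \<Longrightarrow> low j (\<lambda>x. p x + q x)"
  unfolding low_def
proof (elim exE)
  fix c d assume "\<forall>x. p x = (\<Sum>i<j. c i * x ^ i)" "\<forall>x. q x = (\<Sum>i<j. d i * x ^ i)"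
  then show "\<exists>e. \<forall>x. p x + q x = (\<Sum>i<j. e i * x ^ i)"
    by (intro exI[of _ "\<lambda>i. c i + d i"]) (simp add: sum.distrib distrib_right)
qed

lemma low_cmult: "low j p \<Longrightarrow> low j (\<lambda>x. a * p x)"
  unfolding low_def
proof (elim exE)
  fix c assume "\<forall>x. p x = (\<Sum>i<j. c i * x ^ i)"
  then show "\<exists>e. \<forall>x. a * p x = (\<Sum>i<j. e i * x ^ i)"
    by (intro exI[of _ "\<lambda>i. a * c i"]) (simp add: sum_distrib_left mult.assoc)
qed

lemma low_uminus: "low j p \<Longrightarrow> low j (\<lambda>x. - p x)"
  using low_cmult[of j p "-1"] by simp

lemma low_diff: "low j p \<Longrightarrow> low j q \<Longrightarrow> low j (\<lambda>x. p x - q x)"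
  using low_add[of j p "\<lambda>x. - q x"] low_uminus[of j q] by simp

lemma low_sum: "finite A \<Longrightarrow> (\<And>i. i \<in> A \<Longrightarrow> low j (f i)) \<Longrightarrow> low j (\<lambda>x. \<Sum>i\<in>A. f i x)"
proof (induction A rule: finite_induct)
  case empty then show ?case by (simp add: low_zero)
next
  case (insert a A) then show ?case by (simp add: low_add)
qed

lemma low_mono: "j \<le> k \<Longrightarrow> low j p \<Longrightarrow> low k p"
  unfolding low_def
proof (elim exE)
  fix c assume jk: "j \<le> k" and c: "\<forall>x. p x = (\<Sum>i<j. c i * x ^ i)"
  have "(\<Sum>i<k. (if i < j then c i else 0) * x ^ i) = (\<Sum>i<j. c i * x ^ i)" for x
  proof -
    have "(\<Sum>i<k. (if i < j then c i else 0) * x ^ i) = (\<Sum>i\<in>{..<k} \<inter> {i. i < j}. c i * x ^ i)"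
      by (simp add: sum.inter_restrict) (rule sum.cong, auto)
    also have "{..<k} \<inter> {i. i < j} = {..<j}" using jk by auto
    finally show ?thesis .
  qed
  then show "\<exists>e. \<forall>x. p x = (\<Sum>i<k. e i * x ^ i)"
    using c by (intro exI[of _ "\<lambda>i. if i < j then c i else 0"]) simp
qed

lemma low_xmul: "low j p \<Longrightarrow> low (Suc j) (\<lambda>x. x * p x)"
  unfolding low_def
proof (elim exE)
  fix c assume c: "\<forall>x. p x = (\<Sum>i<j. c i * x ^ i)"
  have "x * p x = (\<Sum>i<Suc j. (if i = 0 then 0 else c (i - 1)) * x ^ i)" for x
  proof -
    have "(\<Sum>i<Suc j. (if i = 0 then 0 else c (i - 1)) * x ^ i) = (\<Sum>i<j. c i * x ^ Suc i)"
      by (subst sum.lessThan_Suc_shift) simp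
    also have "\<dots> = x * p x" by (simp add: c sum_distrib_left mult_ac)
    finally show ?thesis by simp
  qed
  then show "\<exists>e. \<forall>x. x * p x = (\<Sum>i<Suc j. e i * x ^ i)"
    by (intro exI[of _ "\<lambda>i. if i = 0 then 0 else c (i - 1)"] allI)
qed

lemma low_pow: "i < j \<Longrightarrow> low j (\<lambda>x. x ^ i)"
  unfolding low_def
proof (intro exI allI)
  fix x :: real assume "i < j"
  have "(\<Sum>m<j. (if m = i then 1 else 0) * x ^ m) = (\<Sum>m<j. if m = i then x ^ m else 0)"
    by (rule sum.cong) auto
  then show "x ^ i = (\<Sum>m<j. (if m = i then 1 else 0) * x ^ m)" using \<open>i < j\<close> by simp
qed

lemma low_const: "0 < j \<Longrightarrow> low j (\<lambda>x. a)"
  using low_cmult[OF low_pow[of 0 j], of a] by simp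

lemma low_cont: "low j p \<Longrightarrow> continuous_on UNIV p"
  unfolding low_def
proof (elim exE)
  fix c assume "\<forall>x. p x = (\<Sum>i<j. c i * x ^ i)"
  then have "p = (\<lambda>x. \<Sum>i<j. c i * x ^ i)" by auto
  then show ?thesis by (simp add: continuous_intros)
qed

lemma low_Suc_split: "low (Suc j) p \<Longrightarrow> \<exists>a. low j (\<lambda>x. p x - a * x ^ j)"
  unfolding low_def
proof (elim exE)
  fix c assume "\<forall>x. p x = (\<Sum>i<Suc j. c i * x ^ i)"
  then have "\<forall>x. p x - c j * x ^ j = (\<Sum>i<j. c i * x ^ i)" by simp
  then show "\<exists>a c. \<forall>x. p x - a * x ^ j = (\<Sum>i<j. c i * x ^ i)" by blast
qed

lemma low_0: "low 0 p \<Longrightarrow> p x = 0"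
  unfolding low_def by auto

lemma low_lt: "low j (\<lambda>x. p x - a * x ^ j) \<Longrightarrow> low (Suc j) p"
proof -
  assume h: "low j (\<lambda>x. p x - a * x ^ j)"
  have "low (Suc j) (\<lambda>x. (p x - a * x ^ j) + a * x ^ j)"
    by (rule low_add[OF low_mono[OF _ h]]) (auto intro: low_cmult low_pow)
  then show ?thesis by simp
qed

lemma low_xmul1: "low j p \<Longrightarrow> low (Suc j) (\<lambda>x. (b * x + c) * p x)"
proof -
  assume h: "low j p"
  have "low (Suc j) (\<lambda>x. b * (x * p x) + c * p x)"
    by (rule low_add[OF low_cmult[OF low_xmul[OF h]] low_cmult[OF low_mono[OF _ h]]]) simp
  then show ?thesis by (simp add: algebra_simps)
qed

lemma induct2: "P 0 \<Longrightarrow> P (Suc 0) \<Longrightarrow> (\<And>k. P k \<Longrightarrow> P (Suc k) \<Longrightarrow> P (Suc (Suc k))) \<Longrightarrow> P n"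
proof -
  assume a: "P 0" "P (Suc 0)" "\<And>k. P k \<Longrightarrow> P (Suc k) \<Longrightarrow> P (Suc (Suc k))"
  have "P n \<and> P (Suc n)" by (induction n) (use a in auto)
  then show "P n" by simp
qed

fun cheb :: "nat \<Rightarrow> real \<Rightarrow> real" where
  "cheb 0 u = 1"
| "cheb (Suc 0) u = u"
| "cheb (Suc (Suc k)) u = 2 * u * cheb (Suc k) u - cheb k u"

lemma cheb_cos: "cheb k (cos t) = cos (real k * t)"
proof (induction k rule: induct2)
  case (3 k)
  have e1: "cos (real (Suc (Suc k)) * t) = cos (real (Suc k) * t + t)" by (simp add: algebra_simps)
  have e2: "cos (real k * t) = cos (real (Suc k) * t - t)" by (simp add: algebra_simps)
  show ?case using 3 unfolding e1 by (simp only: cheb.simps e2 cos_add cos_diff) (simp add: algebra_simps)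
qed auto

definition Ch :: "nat \<Rightarrow> real \<Rightarrow> real" where "Ch k x = cheb k (1 - 2 * x)"

lemma Ch_xth: "Ch k (xth t) = cos (real k * t)"
  unfolding Ch_def one_minus_2xth by (rule cheb_cos)

lemma Ch_low: "low (Suc k) (Ch k)"
  unfolding Ch_def
proof (induction k rule: induct2)
  case 1 then show ?case by (simp add: low_const)
next
  case 2
  have "low 2 (\<lambda>x. (-2) * x ^ 1 + 1)"
    by (intro low_add low_cmult low_pow low_const) auto
  then show ?case by (simp add: numeral_2_eq_2 algebra_simps)
next
  case (3 k)
  have a: "low (Suc (Suc (Suc k))) (\<lambda>x. ((-4) * x + 2) * cheb (Suc k) (1 - 2 * x))"
    by (rule low_xmul1) (use 3 in simp)
  have b: "low (Suc (Suc (Suc k))) (\<lambda>x. cheb k (1 - 2 * x))"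
    by (rule low_mono[OF _ 3(1)]) simp
  show ?case using low_diff[OF a b] by (simp add: algebra_simps)
qed



lemma int_cos0: assumes "k \<ge> 1" shows "((\<lambda>t. cos (real k * t)) has_integral 0) {0..pi}"
proof -
  have "((\<lambda>t. cos (real k * t)) has_integral (sin (real k * pi) / real k - sin (real k * 0) / real k)) {0..pi}"
  proof (rule fundamental_theorem_of_calculus)
    show "0 \<le> pi" by simp
    fix t :: real
    have "((\<lambda>t. sin (real k * t) / real k) has_real_derivative cos (real k * t)) (at t within {0..pi})"
      using assms by (auto intro!: derivative_eq_intros)
    then show "((\<lambda>t. sin (real k * t) / real k) has_vector_derivative cos (real k * t)) (at t within {0..pi})"
      by (simp add: has_real_derivative_iff_has_vector_derivative)
  qed
  then show ?thesis by simp
qed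

lemma int_cos0': "k \<ge> 1 \<Longrightarrow> integral {0..pi} (\<lambda>t. cos (real k * t)) = 0"
  using int_cos0 by (rule integral_unique)

lemma cont_cosx: "continuous_on {0..pi} (\<lambda>t. cos (real k * t) * xth t ^ i)"
  unfolding xth_def by (auto intro!: continuous_intros)

lemma cos_xpow_zero: "i < k \<Longrightarrow> integral {0..pi} (\<lambda>t. cos (real k * t) * xth t ^ i) = 0"
proof (induction i arbitrary: k)
  case 0 then show ?case using int_cos0'[of k] by simp
next
  case (Suc i)
  then obtain m where k: "k = Suc m" by (cases k) auto
  have pt: "cos (real k * t) * xth t ^ Suc i =
      (1/2) * (cos (real k * t) * xth t ^ i) - (1/4) * (cos (real (Suc k) * t) * xth t ^ i)
      - (1/4) * (cos (real m * t) * xth t ^ i)" for t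
  proof -
    have a: "cos (real (Suc k) * t) = cos (real k * t + t)" by (simp add: algebra_simps)
    have b: "cos (real m * t) = cos (real k * t - t)" using k by (simp add: algebra_simps)
    show ?thesis unfolding a b cos_add cos_diff xth_def power_Suc by (simp add: field_simps)
  qed
  have i1: "integral {0..pi} (\<lambda>t. cos (real k * t) * xth t ^ i) = 0" using Suc by simp
  have i2: "integral {0..pi} (\<lambda>t. cos (real (Suc k) * t) * xth t ^ i) = 0" using Suc.IH[of "Suc k"] Suc.prems by linarith
  have i3: "integral {0..pi} (\<lambda>t. cos (real m * t) * xth t ^ i) = 0" using Suc k by simp
  define F where "F j = (\<lambda>t. cos (real j * t) * xth t ^ i)" for j
  have I: "(\<lambda>t. c * F j t) integrable_on {0..pi}" for j c
    unfolding F_def by (rule integrable_continuous_interval) (auto intro!: continuous_intros simp: xth_def)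
  have "integral {0..pi} (\<lambda>t. (1/2) * F k t - (1/4) * F (Suc k) t - (1/4) * F m t)
      = integral {0..pi} (\<lambda>t. (1/2) * F k t) - integral {0..pi} (\<lambda>t. (1/4) * F (Suc k) t)
        - integral {0..pi} (\<lambda>t. (1/4) * F m t)"
    by (simp only: integral_diff I integrable_diff)
  also have "\<dots> = 0" using i1 i2 i3 unfolding F_def by simp
  finally show ?case unfolding pt F_def .
qed

lemma cos_sq_int: assumes "k \<ge> 1" shows "integral {0..pi} (\<lambda>t. cos (real k * t) * cos (real k * t)) = pi / 2"
proof -
  have pt: "cos (real k * t) * cos (real k * t) = 1/2 + (1/2) * cos (real (2*k) * t)" for t
    using cos_double_cos[of "real k * t"] by (simp add: algebra_simps power2_eq_square)
  have "integral {0..pi} (\<lambda>t. cos (real (2*k) * t)) = 0" using assms by (intro int_cos0') simp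
  moreover have "(\<lambda>t. cos (real (2*k) * t)) integrable_on {0..pi}"
    by (rule integrable_continuous_interval) (auto intro!: continuous_intros)
  ultimately have "integral {0..pi} (\<lambda>t. 1/2 + (1/2) * cos (real (2*k) * t)) =
      integral {0..pi} (\<lambda>t. 1/2) + integral {0..pi} (\<lambda>t. (1/2) * cos (real (2*k) * t))"
    by (intro integral_add) auto
  also have "\<dots> = pi / 2" using \<open>integral {0..pi} (\<lambda>t. cos (real (2*k) * t)) = 0\<close> by simp
  finally show ?thesis unfolding pt .
qed

lemma Ch_cont: "continuous_on UNIV (Ch k)"
  by (rule low_cont[OF Ch_low])

lemma Enu_pow_Ch: "i < k \<Longrightarrow> Enu (\<lambda>x. x ^ i * Ch k x) = 0"
  unfolding Enu_def Ch_xth using cos_xpow_zero[of i k] by (simp add: mult.commute)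

lemma Enu_orth: assumes "low k r" shows "Enu (\<lambda>x. r x * Ch k x) = 0"
proof -
  obtain c where c: "\<And>x. r x = (\<Sum>i<k. c i * x ^ i)" using assms unfolding low_def by blast
  have "Enu (\<lambda>x. r x * Ch k x) = Enu (\<lambda>x. \<Sum>i<k. c i * (x ^ i * Ch k x))"
    by (simp add: c sum_distrib_right mult.assoc)
  also have "\<dots> = (\<Sum>i<k. Enu (\<lambda>x. c i * (x ^ i * Ch k x)))"
    by (rule Enu_sum) (auto intro!: continuous_intros Ch_cont)
  also have "\<dots> = 0" by (simp add: Enu_cmult Enu_pow_Ch)
  finally show ?thesis .
qed

lemma Enu_Ch: "k \<ge> 1 \<Longrightarrow> Enu (Ch k) = 0"
  using Enu_orth[of k "\<lambda>x. 1"] low_const[of k 1] by simp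

lemma Enu_Ch_Ch: "Enu (\<lambda>x. Ch l x * Ch k x) = (if k = l \<and> k \<ge> 1 then 1/2 else if k = 0 \<and> l = 0 then 1 else 0)"
proof -
  consider "l < k" | "k < l" | "k = l" by linarith
  then show ?thesis
  proof cases
    case 1 then show ?thesis using Enu_orth[OF low_mono[OF _ Ch_low[of l]], of k] by simp
  next
    case 2 then show ?thesis using Enu_orth[OF low_mono[OF _ Ch_low[of k]], of l] by (simp add: mult.commute)
  next
    case 3
    show ?thesis
    proof (cases "k = 0")
      case True then show ?thesis using 3 by (simp add: Enu_def Ch_def)
    next
      case False then show ?thesis using 3 cos_sq_int[of k] by (simp add: Enu_def Ch_xth)
    qed
  qed
qed



lemma xth_sin: "xth t = sin (t/2) ^ 2"
proof -
  have "cos t = cos (2 * (t/2))" by simp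
  also have "\<dots> = 1 - 2 * sin (t/2) ^ 2" by (rule cos_double_sin)
  finally show ?thesis unfolding xth_def by simp
qed

lemma xth_cos: "1 - xth t = cos (t/2) ^ 2"
  unfolding xth_sin using sin_cos_squared_add[of "t/2"] by linarith

lemma deriv_F: "((\<lambda>t. sin (t/2) ^ (2*a+1) * cos (t/2) ^ (2*b+1)) has_real_derivative
   (real (2*a+1) * (xth t ^ a * (1 - xth t) ^ Suc b) - real (2*b+1) * (xth t ^ Suc a * (1 - xth t) ^ b)) / 2) (at t)"
proof -
  have D: "((\<lambda>t. sin (t/2) ^ (2*a+1) * cos (t/2) ^ (2*b+1)) has_real_derivative
     (real (2*a+1) * sin (t/2) ^ (2*a) * (cos (t/2) * (1/2)) * cos (t/2) ^ (2*b+1) +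
      sin (t/2) ^ (2*a+1) * (real (2*b+1) * cos (t/2) ^ (2*b) * (- sin (t/2) * (1/2))))) (at t)"
    apply (rule derivative_eq_intros refl | simp)+
    apply (simp add: algebra_simps)
    done
  have e: "real (2*a+1) * sin (t/2) ^ (2*a) * (cos (t/2) * (1/2)) * cos (t/2) ^ (2*b+1) +
      sin (t/2) ^ (2*a+1) * (real (2*b+1) * cos (t/2) ^ (2*b) * (- sin (t/2) * (1/2)))
    = (real (2*a+1) * (xth t ^ a * (1 - xth t) ^ Suc b) - real (2*b+1) * (xth t ^ Suc a * (1 - xth t) ^ b)) / 2"
  proof -
    define s where "s = sin (t/2)"
    define c where "c = cos (t/2)"
    have 1: "s ^ (2*a) = xth t ^ a" unfolding s_def xth_sin by (simp add: power_mult)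
    have 2: "c ^ (2*b) = (1 - xth t) ^ b" unfolding c_def xth_cos by (simp add: power_mult)
    have 3: "s * s = xth t" unfolding s_def xth_sin by (simp add: power2_eq_square)
    have 4: "c * c = 1 - xth t" unfolding c_def xth_cos by (simp add: power2_eq_square)
    have "real (2*a+1) * s ^ (2*a) * (c * (1/2)) * c ^ (2*b+1) +
      s ^ (2*a+1) * (real (2*b+1) * c ^ (2*b) * (- s * (1/2)))
      = (real (2*a+1) * (s ^ (2*a) * (c ^ (2*b) * (c * c))) - real (2*b+1) * (s ^ (2*a) * (s * s) * c ^ (2*b))) / 2"
      by (simp add: algebra_simps power_add)
    also have "\<dots> = (real (2*a+1) * (xth t ^ a * (1 - xth t) ^ Suc b) - real (2*b+1) * (xth t ^ Suc a * (1 - xth t) ^ b)) / 2"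
      unfolding 1 2 3 4 by (simp add: algebra_simps)
    finally show ?thesis unfolding s_def c_def .
  qed
  show ?thesis using D unfolding e .
qed

definition Iab :: "nat \<Rightarrow> nat \<Rightarrow> real" where
  "Iab a b = integral {0..pi} (\<lambda>t. xth t ^ a * (1 - xth t) ^ b)"

lemma hi_lin: "(g1 has_integral i1) S \<Longrightarrow> (g2 has_integral i2) S \<Longrightarrow>
  ((\<lambda>t. (c1 * g1 t - c2 * g2 t) / d) has_integral ((c1 * i1 - c2 * i2) / d)) S"
  for g1 g2 :: "real \<Rightarrow> real"
  by (intro has_integral_divide has_integral_diff has_integral_mult_right)

lemma Iab_hi: "((\<lambda>t. xth t ^ a * (1 - xth t) ^ b) has_integral Iab a b) {0..pi}"
proof -
  have "(\<lambda>t. xth t ^ a * (1 - xth t) ^ b) integrable_on {0..pi}"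
    by (rule integrable_continuous_interval) (auto intro!: continuous_intros simp: xth_def)
  then show ?thesis unfolding Iab_def by (rule integrable_integral)
qed

lemma Iab_R1: "Iab a b = Iab (Suc a) b + Iab a (Suc b)"
proof -
  have "((\<lambda>t. xth t ^ Suc a * (1 - xth t) ^ b + xth t ^ a * (1 - xth t) ^ Suc b) has_integral
     (Iab (Suc a) b + Iab a (Suc b))) {0..pi}"
    by (intro has_integral_add Iab_hi)
  moreover have "(\<lambda>t. xth t ^ Suc a * (1 - xth t) ^ b + xth t ^ a * (1 - xth t) ^ Suc b)
      = (\<lambda>t. xth t ^ a * (1 - xth t) ^ b)" by (simp add: algebra_simps)
  ultimately show ?thesis using Iab_hi[of a b] has_integral_unique by metis
qed

lemma Iab_R2: "real (2*a+1) * Iab a (Suc b) = real (2*b+1) * Iab (Suc a) b"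
proof -
  let ?F = "\<lambda>t. sin (t/2) ^ (2*a+1) * cos (t/2) ^ (2*b+1)"
  let ?f = "\<lambda>t. (real (2*a+1) * (xth t ^ a * (1 - xth t) ^ Suc b) - real (2*b+1) * (xth t ^ Suc a * (1 - xth t) ^ b)) / 2"
  have "(?f has_integral (?F pi - ?F 0)) {0..pi}"
  proof (rule fundamental_theorem_of_calculus)
    show "0 \<le> pi" by simp
    fix t :: real
    show "(?F has_vector_derivative ?f t) (at t within {0..pi})"
      using deriv_F[of a b t] by (simp add: has_real_derivative_iff_has_vector_derivative has_vector_derivative_at_within)
  qed
  moreover have "?F pi - ?F 0 = 0" by simp
  ultimately have A: "(?f has_integral 0) {0..pi}" by simp
  have B: "(?f has_integral ((real (2*a+1) * Iab a (Suc b) - real (2*b+1) * Iab (Suc a) b) / 2)) {0..pi}"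
    by (intro hi_lin Iab_hi)
  from has_integral_unique[OF A B] show ?thesis by simp
qed

lemma Iab_R3: "Iab (Suc a) b * (2 * real a + 2 * real b + 2) = (2 * real a + 1) * Iab a b"
  using Iab_R1[of a b] Iab_R2[of a b] by (simp add: algebra_simps)

lemma Iab_R4: "Iab a (Suc b) * (2 * real a + 2 * real b + 2) = (2 * real b + 1) * Iab a b"
  using Iab_R1[of a b] Iab_R2[of a b] by (simp add: algebra_simps)

lemma Iab_00: "Iab 0 0 = pi"
  unfolding Iab_def by simp

lemma Gamma_p1: "x > 0 \<Longrightarrow> Gamma (x + 1) = x * Gamma (x::real)"
  using nonpos_Ints_nonpos by (metis Gamma_plus1 not_le)

definition Gab :: "nat \<Rightarrow> nat \<Rightarrow> real" where
  "Gab a b = Gamma (real a + 1/2) * Gamma (real b + 1/2) / Gamma (real a + real b + 1)"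

lemma Gab_R3: "Gab (Suc a) b * (2 * real a + 2 * real b + 2) = (2 * real a + 1) * Gab a b"
proof -
  define A where "A = Gamma (real a + 1/2)"
  define B where "B = Gamma (real b + 1/2)"
  define C where "C = Gamma (real a + real b + 1)"
  have g1: "Gamma (real (Suc a) + 1/2) = (real a + 1/2) * A"
    using Gamma_p1[of "real a + 1/2"] unfolding A_def by (simp add: algebra_simps)
  have g2: "Gamma (real (Suc a) + real b + 1) = (real a + real b + 1) * C"
    using Gamma_p1[of "real a + real b + 1"] unfolding C_def by (simp add: algebra_simps)
  have "C > 0" unfolding C_def by simp
  have e: "Gab (Suc a) b = (real a + 1/2) * A * B / ((real a + real b + 1) * C)"
    unfolding Gab_def g1 g2 B_def by simp
  have p: "real a + real b + 1 > 0" by simp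
  have "Gab (Suc a) b * (2 * real a + 2 * real b + 2) =
     (real a + 1/2) * A * B / ((real a + real b + 1) * C) * (2 * (real a + real b + 1))"
    unfolding e by simp
  also have "\<dots> = (2 * real a + 1) * (A * B / C)"
  proof -
    define r where "r = real a + real b + 1"
    have "r > 0" unfolding r_def by simp
    then show ?thesis unfolding r_def[symmetric] using \<open>C > 0\<close> by (simp add: field_simps)
  qed
  also have "A * B / C = Gab a b" unfolding Gab_def A_def B_def C_def by simp
  finally show ?thesis .
qed

lemma Gab_R4: "Gab a (Suc b) * (2 * real a + 2 * real b + 2) = (2 * real b + 1) * Gab a b"
proof -
  define A where "A = Gamma (real a + 1/2)"
  define B where "B = Gamma (real b + 1/2)"
  define C where "C = Gamma (real a + real b + 1)"
  have g1: "Gamma (real (Suc b) + 1/2) = (real b + 1/2) * B"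
    using Gamma_p1[of "real b + 1/2"] unfolding B_def by (simp add: algebra_simps)
  have g2: "Gamma (real a + real (Suc b) + 1) = (real a + real b + 1) * C"
    using Gamma_p1[of "real a + real b + 1"] unfolding C_def by (simp add: algebra_simps)
  have "C > 0" unfolding C_def by simp
  have e: "Gab a (Suc b) = A * ((real b + 1/2) * B) / ((real a + real b + 1) * C)"
    unfolding Gab_def g1 g2 A_def by simp
  have p: "real a + real b + 1 > 0" by simp
  have "Gab a (Suc b) * (2 * real a + 2 * real b + 2) =
     A * ((real b + 1/2) * B) / ((real a + real b + 1) * C) * (2 * (real a + real b + 1))"
    unfolding e by simp
  also have "\<dots> = (2 * real b + 1) * (A * B / C)"
  proof -
    define r where "r = real a + real b + 1"
    have "r > 0" unfolding r_def by simp
    then show ?thesis unfolding r_def[symmetric] using \<open>C > 0\<close> by (simp add: field_simps)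
  qed
  also have "A * B / C = Gab a b" unfolding Gab_def A_def B_def C_def by simp
  finally show ?thesis .
qed

lemma Iab_Gab: "Iab a b = Gab a b"
proof (induction a)
  case 0
  show ?case
  proof (induction b)
    case 0 then show ?case by (simp add: Iab_00 Gab_def Gamma_one_half_real)
  next
    case (Suc b)
    have "Iab 0 (Suc b) * (2 * real b + 2) = Gab 0 (Suc b) * (2 * real b + 2)"
      using Iab_R4[of 0 b] Gab_R4[of 0 b] Suc by simp
    then show ?case by simp
  qed
next
  case (Suc a)
  have "Iab (Suc a) b * (2 * real a + 2 * real b + 2) = Gab (Suc a) b * (2 * real a + 2 * real b + 2)"
    using Iab_R3[of a b] Gab_R3[of a b] Suc by simp
  moreover have "2 * real a + 2 * real b + 2 \<noteq> 0" by simp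
  ultimately show ?case by simp
qed

lemma Iab_pos: "Iab a b > 0"
  unfolding Iab_Gab Gab_def by simp

lemma Iab_shift: "Iab (a + j) b = Iab a b * (\<Prod>i<j. (2 * real (a + i) + 1) / (2 * real (a + b + i) + 2))"
proof (induction j)
  case 0 then show ?case by simp
next
  case (Suc j)
  have "Iab (Suc (a + j)) b = (2 * real (a + j) + 1) * Iab (a + j) b / (2 * real (a + j) + 2 * real b + 2)"
    using Iab_R3[of "a + j" b] by (simp add: field_simps)
  then show ?case using Suc by (simp add: algebra_simps)
qed

definition bern :: "nat \<Rightarrow> nat \<Rightarrow> real \<Rightarrow> real" where
  "bern n y x = real (n choose y) * x ^ y * (1 - x) ^ (n - y)"

lemma bern_cont: "continuous_on UNIV (bern n y)"
  unfolding bern_def by (auto intro!: continuous_intros)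

lemma Enu_xpow_bern: "y \<le> n \<Longrightarrow> Enu (\<lambda>x. x ^ j * bern n y x) = real (n choose y) * Iab (y + j) (n - y) / pi"
  unfolding Enu_def Iab_def bern_def
  by (simp add: power_add mult_ac flip: integral_mult_right)

lemma ref_out_Enu: assumes "y \<le> n" shows "ref_out n y = Enu (bern n y)"
proof -
  have "Enu (bern n y) = real (n choose y) * Iab y (n - y) / pi"
    using Enu_xpow_bern[OF assms, of 0] by simp
  also have "\<dots> = real (n choose y) * Gab y (n - y) / pi" by (simp add: Iab_Gab)
  also have "\<dots> = ref_out n y"
  proof -
    have f: "Gamma (real m + 1) = fact m" for m :: nat using Gamma_fact[of m] by (simp add: add.commute)
    have e: "real y + real (n - y) + 1 = real n + 1" using assms by simp
    have "real (n choose y) = fact n / (fact y * fact (n - y))" using binomial_fact[OF assms] by simp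
    then show ?thesis unfolding Gab_def ref_out_def e f by (simp add: field_simps)
  qed
  finally show ?thesis by simp
qed

lemma ref_out_pos: "y \<le> n \<Longrightarrow> ref_out n y > 0"
  unfolding ref_out_def by (simp add: pi_gt_zero)



definition ff :: "nat \<Rightarrow> real \<Rightarrow> real" where "ff m t = (\<Prod>i<m. t - real i)"

lemma ff_0[simp]: "ff 0 t = 1" unfolding ff_def by simp

lemma ff_Suc: "ff (Suc m) t = ff m t * (t - real m)"
  unfolding ff_def by simp

lemma ff_Suc_shift: "ff (Suc m) t = t * ff m (t - 1)"
  unfolding ff_def by (subst prod.lessThan_Suc_shift) (simp add: algebra_simps)

lemma ff_low: "low m (\<lambda>t. ff m t - t ^ m)"
proof (induction m)
  case 0 then show ?case by (simp add: low_zero)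
next
  case (Suc m)
  have a: "low (Suc m) (\<lambda>t. (1 * t + (- real m)) * (ff m t - t ^ m))"
    by (rule low_xmul1[OF Suc])
  have b: "low (Suc m) (\<lambda>t. (- real m) * t ^ m)"
    by (rule low_cmult[OF low_pow]) simp
  have "low (Suc m) (\<lambda>t. (1 * t + (- real m)) * (ff m t - t ^ m) + (- real m) * t ^ m)"
    by (rule low_add[OF a b])
  then show ?case by (simp add: ff_Suc algebra_simps)
qed

lemma bern_sum1: "(\<Sum>y\<le>n. bern n y x) = 1"
  using binomial_ring[of x "1 - x" n] unfolding bern_def by simp

lemma bern_shift: "bern (Suc n) (Suc y) x * real (Suc y) = real (Suc n) * x * bern n y x"
proof -
  have h: "real (Suc n choose Suc y) * real (Suc y) = real (Suc n) * real (n choose y)"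
    using Suc_times_binomial_eq[of n y] by (metis of_nat_mult)
  have "bern (Suc n) (Suc y) x * real (Suc y) = (real (Suc n choose Suc y) * real (Suc y)) * (x * (x ^ y * (1 - x) ^ (n - y)))"
    unfolding bern_def by (simp only: power_Suc diff_Suc_Suc mult_ac)
  also have "\<dots> = real (Suc n) * x * bern n y x" unfolding h bern_def by (simp only: mult_ac)
  finally show ?thesis .
qed

lemma bern_ff: "(\<Sum>y\<le>n. bern n y x * ff m (real y)) = ff m (real n) * x ^ m"
proof (induction m arbitrary: n)
  case 0 then show ?case by (simp add: bern_sum1)
next
  case (Suc m)
  show ?case
  proof (cases n)
    case 0 then show ?thesis by (simp add: ff_Suc_shift)
  next
    case (Suc n')
    have "(\<Sum>y\<le>n. bern n y x * ff (Suc m) (real y)) = (\<Sum>y\<le>Suc n'. bern (Suc n') y x * ff (Suc m) (real y))"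
      using Suc by simp
    also have "\<dots> = (\<Sum>y\<le>n'. bern (Suc n') (Suc y) x * ff (Suc m) (real (Suc y)))"
      by (subst sum.atMost_Suc_shift) (simp add: ff_Suc_shift)
    also have "\<dots> = (\<Sum>y\<le>n'. real (Suc n') * x * (bern n' y x * ff m (real y)))"
    proof (rule sum.cong)
      fix y assume "y \<in> {..n'}"
      have "bern (Suc n') (Suc y) x * ff (Suc m) (real (Suc y)) = (bern (Suc n') (Suc y) x * real (Suc y)) * ff m (real y)"
        by (simp add: ff_Suc_shift)
      also have "\<dots> = real (Suc n') * x * (bern n' y x * ff m (real y))" by (subst bern_shift) (simp only: mult.assoc)
      finally show "bern (Suc n') (Suc y) x * ff (Suc m) (real (Suc y)) = real (Suc n') * x * (bern n' y x * ff m (real y))" .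
    qed simp
    also have "\<dots> = real (Suc n') * x * (ff m (real n') * x ^ m)"
      by (simp add: Suc.IH flip: sum_distrib_left)
    also have "\<dots> = ff (Suc m) (real n) * x ^ Suc m"
      using Suc by (simp add: ff_Suc_shift)
    finally show ?thesis .
  qed
qed

definition Bn :: "nat \<Rightarrow> (real \<Rightarrow> real) \<Rightarrow> real \<Rightarrow> real" where
  "Bn n q x = (\<Sum>y\<le>n. bern n y x * q (real y))"

lemma Bn_add: "Bn n (\<lambda>t. p t + q t) x = Bn n p x + Bn n q x"
  unfolding Bn_def by (simp add: sum.distrib algebra_simps)

lemma Bn_cmult: "Bn n (\<lambda>t. a * p t) x = a * Bn n p x"
  unfolding Bn_def by (simp add: sum_distrib_left algebra_simps)

lemma Bn_low: "low j q \<Longrightarrow> low j (Bn n q)"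
proof (induction j arbitrary: q)
  case 0
  then have "q = (\<lambda>t. 0)" using low_0 by blast
  then show ?case by (simp add: Bn_def low_zero)
next
  case (Suc j)
  obtain a where a: "low j (\<lambda>t. q t - a * t ^ j)" using low_Suc_split[OF Suc.prems] by blast
  have r: "low j (\<lambda>t. (q t - a * t ^ j) - a * (ff j t - t ^ j))"
    by (rule low_diff[OF a low_cmult[OF ff_low]])
  have "low j (Bn n (\<lambda>t. (q t - a * t ^ j) - a * (ff j t - t ^ j)))" by (rule Suc.IH[OF r])
  moreover have "(\<lambda>t. (q t - a * t ^ j) - a * (ff j t - t ^ j)) = (\<lambda>t. q t - a * ff j t)"
    by (auto simp: algebra_simps)
  ultimately have A: "low (Suc j) (Bn n (\<lambda>t. q t - a * ff j t))" using low_mono[of j "Suc j"] by simp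
  have B: "low (Suc j) (\<lambda>x. (a * ff j (real n)) * x ^ j)" by (rule low_cmult[OF low_pow]) simp
  have "Bn n q x = Bn n (\<lambda>t. q t - a * ff j t) x + (a * ff j (real n)) * x ^ j" for x
    using Bn_add[of n "\<lambda>t. q t - a * ff j t" "\<lambda>t. a * ff j t" x] Bn_cmult[of n a "ff j" x]
    by (simp add: Bn_def bern_ff)
  then have "Bn n q = (\<lambda>x. Bn n (\<lambda>t. q t - a * ff j t) x + (a * ff j (real n)) * x ^ j)" by auto
  then show ?case using low_add[OF A B] by simp
qed

lemma Bn_lt: assumes "low j (\<lambda>t. q t - a * t ^ j)"
  shows "low j (\<lambda>x. Bn n q x - a * ff j (real n) * x ^ j)"
proof -
  have r: "low j (\<lambda>t. (q t - a * t ^ j) - a * (ff j t - t ^ j))"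
    by (rule low_diff[OF assms low_cmult[OF ff_low]])
  have "low j (Bn n (\<lambda>t. (q t - a * t ^ j) - a * (ff j t - t ^ j)))" by (rule Bn_low[OF r])
  moreover have "Bn n (\<lambda>t. (q t - a * t ^ j) - a * (ff j t - t ^ j)) x = Bn n q x - a * ff j (real n) * x ^ j" for x
    using Bn_add[of n "\<lambda>t. q t - a * ff j t" "\<lambda>t. a * ff j t" x] Bn_cmult[of n a "ff j" x]
    by (simp add: Bn_def bern_ff algebra_simps)
  then have "Bn n (\<lambda>t. (q t - a * t ^ j) - a * (ff j t - t ^ j)) = (\<lambda>x. Bn n q x - a * ff j (real n) * x ^ j)"
    by (rule ext)
  ultimately show ?thesis by simp
qed

definition Rj :: "nat \<Rightarrow> nat \<Rightarrow> real \<Rightarrow> real" where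
  "Rj n j t = (\<Prod>i<j. (2 * (t + real i) + 1) / (2 * (real n + real i) + 2))"

definition dj :: "nat \<Rightarrow> nat \<Rightarrow> real" where
  "dj n j = (\<Prod>i<j. 1 / (real n + real i + 1))"

lemma Rj_lt: "low j (\<lambda>t. Rj n j t - dj n j * t ^ j)"
proof (induction j)
  case 0 then show ?case by (simp add: Rj_def dj_def low_zero)
next
  case (Suc j)
  define b where "b = 1 / (real n + real j + 1)"
  define c where "c = (2 * real j + 1) / (2 * real n + 2 * real j + 2)"
  have fac: "(2 * (t + real j) + 1) / (2 * (real n + real j) + 2) = b * t + c" for t
  proof -
    define r where "r = real n + real j + 1"
    have r0: "r \<noteq> 0" unfolding r_def by simp
    have e1: "2 * (real n + real j) + 2 = 2 * r" "2 * real n + 2 * real j + 2 = 2 * r" unfolding r_def by simp_all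
    show ?thesis unfolding b_def c_def e1 r_def[symmetric] using r0 by (simp add: field_simps)
  qed
  have R: "Rj n (Suc j) t = Rj n j t * (b * t + c)" for t
    unfolding Rj_def using fac by simp
  have d: "dj n (Suc j) = dj n j * b" unfolding dj_def b_def by simp
  have a: "low (Suc j) (\<lambda>t. (b * t + c) * (Rj n j t - dj n j * t ^ j))" by (rule low_xmul1[OF Suc])
  have e: "low (Suc j) (\<lambda>t. (dj n j * c) * t ^ j)" by (rule low_cmult[OF low_pow]) simp
  have "low (Suc j) (\<lambda>t. (b * t + c) * (Rj n j t - dj n j * t ^ j) + (dj n j * c) * t ^ j)"
    by (rule low_add[OF a e])
  then show ?case unfolding R d by (simp add: algebra_simps)
qed

definition lam :: "nat \<Rightarrow> nat \<Rightarrow> real" where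
  "lam n j = (\<Prod>i<j. (real n - real i) / (real n + real i + 1))"

lemma lam_eq: "lam n j = dj n j * ff j (real n)"
  unfolding lam_def dj_def ff_def by (simp add: prod.distrib[symmetric])

lemma ref_out_nz: "y \<le> n \<Longrightarrow> ref_out n y \<noteq> 0"
  using ref_out_pos[of y n] by simp

definition Bop :: "nat \<Rightarrow> (real \<Rightarrow> real) \<Rightarrow> real \<Rightarrow> real" where
  "Bop n h x = (\<Sum>y\<le>n. bern n y x * (Enu (\<lambda>z. h z * bern n y z) / ref_out n y))"

lemma Bop_cont: "continuous_on UNIV (Bop n h)"
  unfolding Bop_def bern_def using ref_out_nz by (auto intro!: continuous_intros)

lemma Bop_pow: "Bop n (\<lambda>z. z ^ j) x = Bn n (Rj n j) x"
  unfolding Bop_def Bn_def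
proof (rule sum.cong)
  fix y assume y: "y \<in> {..n}"
  then have yn: "y \<le> n" by simp
  have c: "real (n choose y) > 0" using yn by simp
  have "Enu (\<lambda>z. z ^ j * bern n y z) / ref_out n y = Iab (y + j) (n - y) / Iab y (n - y)"
    unfolding ref_out_Enu[OF yn] using Enu_xpow_bern[OF yn, of j] Enu_xpow_bern[OF yn, of 0] c
    by (simp add: pi_gt_zero)
  also have "\<dots> = Rj n j (real y)"
    using Iab_shift[of y j "n - y"] Iab_pos[of y "n - y"] yn by (simp add: Rj_def)
  finally show "bern n y x * (Enu (\<lambda>z. z ^ j * bern n y z) / ref_out n y) = bern n y x * Rj n j (real y)"
    by simp
qed simp

lemma Bop_pow_lt: "low j (\<lambda>x. Bop n (\<lambda>z. z ^ j) x - lam n j * x ^ j)"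
  unfolding Bop_pow lam_eq using Bn_lt[OF Rj_lt, of j n] by (simp add: mult_ac)

lemma Bop_pow_low: "low (Suc j) (Bop n (\<lambda>z. z ^ j))"
  using low_lt[OF Bop_pow_lt] .

lemma Bop_add: "continuous_on UNIV f \<Longrightarrow> continuous_on UNIV g \<Longrightarrow>
   Bop n (\<lambda>x. f x + g x) x = Bop n f x + Bop n g x"
  unfolding Bop_def
  by (simp add: distrib_right Enu_add continuous_intros bern_cont add_divide_distrib sum.distrib algebra_simps ref_out_nz)

lemma Bop_cmult: "Bop n (\<lambda>x. a * f x) x = a * Bop n f x"
  unfolding Bop_def
  by (simp add: mult.assoc Enu_cmult sum_distrib_left algebra_simps ref_out_nz)

lemma Bop_sum: "finite A \<Longrightarrow> (\<And>i. i \<in> A \<Longrightarrow> continuous_on UNIV (f i)) \<Longrightarrow>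
  Bop n (\<lambda>x. \<Sum>i\<in>A. f i x) x = (\<Sum>i\<in>A. Bop n (f i) x)"
proof (induction A rule: finite_induct)
  case empty then show ?case by (simp add: Bop_def Enu_def)
next
  case (insert a A)
  have "Bop n (\<lambda>x. \<Sum>i\<in>insert a A. f i x) x = Bop n (\<lambda>x. f a x + (\<Sum>i\<in>A. f i x)) x"
    using insert by simp
  also have "\<dots> = Bop n (f a) x + Bop n (\<lambda>x. \<Sum>i\<in>A. f i x) x"
    by (rule Bop_add) (use insert in \<open>auto intro!: continuous_on_sum\<close>)
  finally show ?case using insert by simp
qed

lemma Bop_lt: assumes "low j (\<lambda>x. p x - a * x ^ j)"
  shows "low j (\<lambda>x. Bop n p x - a * lam n j * x ^ j)"
proof -
  obtain c where c: "\<And>x. p x - a * x ^ j = (\<Sum>i<j. c i * x ^ i)" using assms unfolding low_def by blast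
  have p: "p = (\<lambda>x. a * x ^ j + (\<Sum>i<j. c i * x ^ i))" using c by (auto simp: algebra_simps)
  have "Bop n p x = a * Bop n (\<lambda>z. z ^ j) x + (\<Sum>i<j. c i * Bop n (\<lambda>z. z ^ i) x)" for x
  proof -
    have "Bop n p x = Bop n (\<lambda>z. a * z ^ j) x + Bop n (\<lambda>x. \<Sum>i<j. c i * x ^ i) x"
      unfolding p by (rule Bop_add) (auto intro!: continuous_intros)
    also have "Bop n (\<lambda>x. \<Sum>i<j. c i * x ^ i) x = (\<Sum>i<j. Bop n (\<lambda>x. c i * x ^ i) x)"
      by (rule Bop_sum) (auto intro!: continuous_intros)
    finally show ?thesis by (simp add: Bop_cmult)
  qed
  then have e: "(\<lambda>x. Bop n p x - a * lam n j * x ^ j) =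
     (\<lambda>x. a * (Bop n (\<lambda>z. z ^ j) x - lam n j * x ^ j) + (\<Sum>i<j. c i * Bop n (\<lambda>z. z ^ i) x))"
    by (auto simp: algebra_simps)
  have "low j (\<lambda>x. a * (Bop n (\<lambda>z. z ^ j) x - lam n j * x ^ j) + (\<Sum>i<j. c i * Bop n (\<lambda>z. z ^ i) x))"
    by (intro low_add low_cmult Bop_pow_lt low_sum low_mono[OF _ Bop_pow_low]) auto
  then show ?thesis unfolding e .
qed

lemma Bop_low: "low j p \<Longrightarrow> low j (Bop n p)"
proof (cases j)
  case 0
  assume "low j p"
  then have "p = (\<lambda>x. 0)" using 0 low_0 by blast
  moreover have "Bop n (\<lambda>x. 0) = (\<lambda>x. 0)" by (rule ext) (simp add: Bop_def Enu_def)
  ultimately show ?thesis using low_zero by simp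
next
  case (Suc j')
  assume "low j p"
  then obtain a where "low j' (\<lambda>x. p x - a * x ^ j')" using Suc low_Suc_split by blast
  from low_lt[OF Bop_lt[OF this]] show ?thesis using Suc by simp
qed

lemma Bop_selfadj: assumes "continuous_on UNIV g"
  shows "Enu (\<lambda>x. g x * Bop n h x) = (\<Sum>y\<le>n. Enu (\<lambda>z. g z * bern n y z) * Enu (\<lambda>z. h z * bern n y z) / ref_out n y)"
proof -
  have "Enu (\<lambda>x. g x * Bop n h x) = Enu (\<lambda>x. \<Sum>y\<le>n. (Enu (\<lambda>z. h z * bern n y z) / ref_out n y) * (g x * bern n y x))"
    unfolding Bop_def by (simp add: sum_distrib_left mult_ac)
  also have "\<dots> = (\<Sum>y\<le>n. Enu (\<lambda>x. (Enu (\<lambda>z. h z * bern n y z) / ref_out n y) * (g x * bern n y x)))"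
    using ref_out_nz by (intro Enu_sum) (auto intro!: continuous_intros assms bern_cont)
  also have "\<dots> = (\<Sum>y\<le>n. Enu (\<lambda>z. g z * bern n y z) * Enu (\<lambda>z. h z * bern n y z) / ref_out n y)"
    by (simp only: Enu_cmult) (simp add: mult_ac)
  finally show ?thesis .
qed

lemma Bop_sym: "continuous_on UNIV g \<Longrightarrow> continuous_on UNIV h \<Longrightarrow>
  Enu (\<lambda>x. g x * Bop n h x) = Enu (\<lambda>x. Bop n g x * h x)"
  using Bop_selfadj[of g n h] Bop_selfadj[of h n g] by (simp add: mult_ac)

lemma Enu_sq_zero: assumes "continuous_on UNIV d" "Enu (\<lambda>x. d x * d x) = 0" "0 \<le> x" "x \<le> 1"
  shows "d x = 0"
proof -
  have "integral {0..pi} (\<lambda>t. d (xth t) * d (xth t)) = 0" using assms(2) unfolding Enu_def by simp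
  moreover have "continuous_on {0..pi} (\<lambda>t. d (xth t) * d (xth t))"
    using cont_xth[OF assms(1)] by (intro continuous_on_mult)
  ultimately have "\<forall>t\<in>{0..pi}. d (xth t) * d (xth t) = 0"
    using integral_eq_0_iff[of 0 pi "\<lambda>t. d (xth t) * d (xth t)"] by (simp add: pi_gt_zero)
  moreover have "arccos (1 - 2 * x) \<in> {0..pi}" using assms(3,4) by (simp add: arccos_lbound arccos_ubound)
  moreover have "xth (arccos (1 - 2 * x)) = x" using assms(3,4) unfolding xth_def by simp
  ultimately show ?thesis by (metis mult_eq_0_iff)
qed

lemma Bop_Ch: assumes "0 \<le> x" "x \<le> 1" shows "Bop n (Ch k) x = lam n k * Ch k x"
proof -
  obtain a where a: "low k (\<lambda>x. Ch k x - a * x ^ k)" using low_Suc_split[OF Ch_low] by blast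
  define d where "d = (\<lambda>x. Bop n (Ch k) x - lam n k * Ch k x)"
  have dl: "low k d"
  proof -
    have "low k (\<lambda>x. (Bop n (Ch k) x - a * lam n k * x ^ k) - lam n k * (Ch k x - a * x ^ k))"
      by (rule low_diff[OF Bop_lt[OF a] low_cmult[OF a]])
    then show ?thesis unfolding d_def by (simp add: algebra_simps)
  qed
  have dc: "continuous_on UNIV d" by (rule low_cont[OF dl])
  have "(\<lambda>x. d x * d x) = (\<lambda>x. d x * Bop n (Ch k) x - lam n k * (d x * Ch k x))"
    by (auto simp: d_def algebra_simps)
  then have "Enu (\<lambda>x. d x * d x) = Enu (\<lambda>x. d x * Bop n (Ch k) x) - Enu (\<lambda>x. lam n k * (d x * Ch k x))"
    by (simp add: Enu_diff continuous_intros dc Bop_cont Ch_cont)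
  also have "Enu (\<lambda>x. lam n k * (d x * Ch k x)) = lam n k * Enu (\<lambda>x. d x * Ch k x)" by (rule Enu_cmult)
  also have "Enu (\<lambda>x. d x * Ch k x) = 0" by (rule Enu_orth[OF dl])
  also have "Enu (\<lambda>x. d x * Bop n (Ch k) x) = Enu (\<lambda>x. Bop n d x * Ch k x)"
    by (rule Bop_sym[OF dc Ch_cont])
  also have "\<dots> = 0" by (rule Enu_orth[OF Bop_low[OF dl]])
  finally have "Enu (\<lambda>x. d x * d x) = 0" by simp
  from Enu_sq_zero[OF dc this assms] show ?thesis unfolding d_def by simp
qed



lemma sum_cos_diff: "(\<Sum>a<N. \<Sum>b<N. cos ((real a - real b) * p)) =
   (\<Sum>a<N. cos (real a * p)) ^ 2 + (\<Sum>a<N. sin (real a * p)) ^ 2"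
proof -
  have "(\<Sum>a<N. \<Sum>b<N. cos ((real a - real b) * p)) =
     (\<Sum>a<N. \<Sum>b<N. cos (real a * p) * cos (real b * p) + sin (real a * p) * sin (real b * p))"
    by (simp add: left_diff_distrib cos_diff)
  also have "\<dots> = (\<Sum>a<N. cos (real a * p)) * (\<Sum>b<N. cos (real b * p)) + (\<Sum>a<N. sin (real a * p)) * (\<Sum>b<N. sin (real b * p))"
    by (simp add: sum.distrib sum_product)
  finally show ?thesis by (simp add: power2_eq_square)
qed

lemma Gker_eq: "(\<Sum>a<N. \<Sum>b<N. cos ((real a - real b) * p) * cos ((real a - real b) * q)) =
   ((\<Sum>a<N. \<Sum>b<N. cos ((real a - real b) * (p + q))) + (\<Sum>a<N. \<Sum>b<N. cos ((real a - real b) * (p - q)))) / 2"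
proof -
  have "cos (d * p) * cos (d * q) = (cos (d * (p + q)) + cos (d * (p - q))) / 2" for d
    by (simp add: distrib_left right_diff_distrib cos_add cos_diff)
  then show ?thesis by (simp add: sum.distrib add_divide_distrib flip: sum_divide_distrib)
qed

lemma Gker_nonneg: "(\<Sum>a<N. \<Sum>b<N. cos ((real a - real b) * p) * cos ((real a - real b) * q)) \<ge> 0"
  unfolding Gker_eq sum_cos_diff by simp

lemma Gker_diag: "(\<Sum>a<N. \<Sum>b<N. cos ((real a - real b) * p) * cos ((real a - real b) * p)) \<ge> real N ^ 2 / 2"
  unfolding Gker_eq sum_cos_diff by simp

lemma sum4_swap: "(\<Sum>a\<in>A. \<Sum>b\<in>B. \<Sum>x\<in>C. \<Sum>z\<in>D. f a b x z) = (\<Sum>x\<in>C. \<Sum>z\<in>D. \<Sum>a\<in>A. \<Sum>b\<in>B. f a b x z)"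
proof -
  have "(\<Sum>a\<in>A. \<Sum>b\<in>B. \<Sum>x\<in>C. \<Sum>z\<in>D. f a b x z) = (\<Sum>a\<in>A. \<Sum>x\<in>C. \<Sum>b\<in>B. \<Sum>z\<in>D. f a b x z)"
    by (rule sum.cong[OF refl]) (rule sum.swap)
  also have "\<dots> = (\<Sum>x\<in>C. \<Sum>a\<in>A. \<Sum>b\<in>B. \<Sum>z\<in>D. f a b x z)" by (rule sum.swap)
  also have "\<dots> = (\<Sum>x\<in>C. \<Sum>a\<in>A. \<Sum>z\<in>D. \<Sum>b\<in>B. f a b x z)"
    by (rule sum.cong[OF refl], rule sum.cong[OF refl]) (rule sum.swap)
  also have "\<dots> = (\<Sum>x\<in>C. \<Sum>z\<in>D. \<Sum>a\<in>A. \<Sum>b\<in>B. f a b x z)"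
    by (rule sum.cong[OF refl]) (rule sum.swap)
  finally show ?thesis .
qed

lemma toep_lower:
  fixes S :: "'a set" and w th :: "'a \<Rightarrow> real"
  assumes S: "finite S" "S \<noteq> {}" and w: "\<And>x. x \<in> S \<Longrightarrow> w x \<ge> 0" and w1: "(\<Sum>x\<in>S. w x) = 1"
  defines "Mf \<equiv> \<lambda>t. \<Sum>x\<in>S. w x * cos (t * th x)"
  shows "(\<Sum>a<N. \<Sum>b<N. Mf (real a - real b) ^ 2) \<ge> real N ^ 2 / (2 * real (card S))"
proof -
  define G where "G p q = (\<Sum>a<N. \<Sum>b<N. cos ((real a - real b) * p) * cos ((real a - real b) * q))" for p q
  have "(\<Sum>a<N. \<Sum>b<N. Mf (real a - real b) ^ 2) =
      (\<Sum>a<N. \<Sum>b<N. \<Sum>x\<in>S. \<Sum>z\<in>S. w x * w z * (cos ((real a - real b) * th x) * cos ((real a - real b) * th z)))"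
    unfolding Mf_def power2_eq_square sum_product
    by (intro sum.cong refl) (simp add: mult_ac)
  also have "\<dots> = (\<Sum>x\<in>S. \<Sum>z\<in>S. \<Sum>a<N. \<Sum>b<N. w x * w z * (cos ((real a - real b) * th x) * cos ((real a - real b) * th z)))"
    by (rule sum4_swap)
  also have "\<dots> = (\<Sum>x\<in>S. \<Sum>z\<in>S. w x * w z * G (th x) (th z))"
    unfolding G_def by (simp add: sum_distrib_left)
  finally have eq: "(\<Sum>a<N. \<Sum>b<N. Mf (real a - real b) ^ 2) = (\<Sum>x\<in>S. \<Sum>z\<in>S. w x * w z * G (th x) (th z))" .
  have a: "(\<Sum>x\<in>S. \<Sum>z\<in>S. w x * w z * G (th x) (th z)) \<ge> (\<Sum>x\<in>S. w x * w x * G (th x) (th x))"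
  proof (rule sum_mono)
    fix x assume x: "x \<in> S"
    show "w x * w x * G (th x) (th x) \<le> (\<Sum>z\<in>S. w x * w z * G (th x) (th z))"
      by (rule member_le_sum[OF x _ S(1), of "\<lambda>z. w x * w z * G (th x) (th z)"])
        (use w x in \<open>auto simp: G_def intro!: mult_nonneg_nonneg Gker_nonneg\<close>)
  qed
  have b: "(\<Sum>x\<in>S. w x * w x * G (th x) (th x)) \<ge> (\<Sum>x\<in>S. w x * w x * (real N ^ 2 / 2))"
  proof (rule sum_mono)
    fix x assume "x \<in> S"
    then have "w x * w x \<ge> 0" using w by simp
    moreover have "G (th x) (th x) \<ge> real N ^ 2 / 2" unfolding G_def by (rule Gker_diag)
    ultimately show "w x * w x * (real N ^ 2 / 2) \<le> w x * w x * G (th x) (th x)" by (rule mult_left_mono[rotated])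
  qed
  have c: "(\<Sum>x\<in>S. w x * w x) \<ge> 1 / real (card S)"
  proof -
    have "(\<Sum>x\<in>S. w x * 1) ^ 2 \<le> (\<Sum>x\<in>S. (w x)\<^sup>2) * (\<Sum>x\<in>S. 1\<^sup>2)" by (rule Cauchy_Schwarz_ineq_sum)
    then have "1 \<le> (\<Sum>x\<in>S. w x * w x) * real (card S)" using w1 by (simp add: power2_eq_square)
    moreover have "real (card S) > 0" using S by (simp add: card_gt_0_iff)
    ultimately show ?thesis by (simp add: field_simps)
  qed
  have "(\<Sum>x\<in>S. w x * w x * (real N ^ 2 / 2)) = (\<Sum>x\<in>S. w x * w x) * (real N ^ 2 / 2)"
    by (simp add: sum_distrib_right)
  also have "\<dots> \<ge> 1 / real (card S) * (real N ^ 2 / 2)" by (rule mult_right_mono[OF c]) simp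
  finally show ?thesis using a b eq by simp
qed



lemma toep_upper_row:
  fixes g :: "real \<Rightarrow> real"
  assumes ev: "\<And>t. g (- t) = g t" and aN: "a < N"
  shows "(\<Sum>b<N. g (real a - real b) ^ 2) \<le> g 0 ^ 2 + 2 * (\<Sum>k\<in>{1..<N}. g (real k) ^ 2)"
proof -
  have split: "{..<N} = {..<a} \<union> ({a} \<union> {a<..<N})" using aN by auto
  have L: "(\<Sum>b<a. g (real a - real b) ^ 2) \<le> (\<Sum>k\<in>{1..<N}. g (real k) ^ 2)"
  proof -
    have "(\<Sum>b<a. g (real a - real b) ^ 2) = (\<Sum>b<a. g (real (a - b)) ^ 2)"
      by (rule sum.cong) (auto simp: of_nat_diff)
    also have "\<dots> = (\<Sum>k\<in>(\<lambda>b. a - b) ` {..<a}. g (real k) ^ 2)"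
      by (rule sum.reindex[symmetric, unfolded comp_def]) (auto simp: inj_on_def)
    also have "\<dots> \<le> (\<Sum>k\<in>{1..<N}. g (real k) ^ 2)"
      by (rule sum_mono2) (use aN in auto)
    finally show ?thesis .
  qed
  have U: "(\<Sum>b\<in>{a<..<N}. g (real a - real b) ^ 2) \<le> (\<Sum>k\<in>{1..<N}. g (real k) ^ 2)"
  proof -
    have "(\<Sum>b\<in>{a<..<N}. g (real a - real b) ^ 2) = (\<Sum>b\<in>{a<..<N}. g (real (b - a)) ^ 2)"
    proof (rule sum.cong)
      fix b assume "b \<in> {a<..<N}"
      then have e: "real a - real b = - real (b - a)" by (simp add: of_nat_diff)
      show "g (real a - real b) ^ 2 = g (real (b - a)) ^ 2" by (simp only: e ev)
    qed simp
    also have "\<dots> = (\<Sum>k\<in>(\<lambda>b. b - a) ` {a<..<N}. g (real k) ^ 2)"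
      by (rule sum.reindex[symmetric, unfolded comp_def]) (rule inj_onI, auto)
    also have "\<dots> \<le> (\<Sum>k\<in>{1..<N}. g (real k) ^ 2)"
    proof (rule sum_mono2)
      show "(\<lambda>b. b - a) ` {a<..<N} \<subseteq> {1..<N}" by (auto simp: image_def)
    qed auto
    finally show ?thesis .
  qed
  have "(\<Sum>b<N. g (real a - real b) ^ 2) = (\<Sum>b<a. g (real a - real b) ^ 2) + (\<Sum>b\<in>{a} \<union> {a<..<N}. g (real a - real b) ^ 2)"
    unfolding split by (rule sum.union_disjoint) auto
  also have "(\<Sum>b\<in>{a} \<union> {a<..<N}. g (real a - real b) ^ 2) = g 0 ^ 2 + (\<Sum>b\<in>{a<..<N}. g (real a - real b) ^ 2)"
    by (subst sum.union_disjoint) auto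
  finally have "(\<Sum>b<N. g (real a - real b) ^ 2) = (\<Sum>b<a. g (real a - real b) ^ 2) + (g 0 ^ 2 + (\<Sum>b\<in>{a<..<N}. g (real a - real b) ^ 2))" .
  then show ?thesis using L U by simp
qed

lemma Ch_arccos: "0 \<le> x \<Longrightarrow> x \<le> 1 \<Longrightarrow> Ch k x = cos (real k * arccos (1 - 2 * x))"
  unfolding Ch_def using cheb_cos[of k "arccos (1 - 2 * x)"] by simp

lemma toeplitz:
  assumes S: "finite S" "S \<noteq> {}" "S \<subseteq> {0..1}" and w: "\<And>x. x \<in> S \<Longrightarrow> w x \<ge> 0"
    and w1: "(\<Sum>x\<in>S. w x) = 1"
  shows "real N * (1 + 2 * (\<Sum>k\<in>{1..<N}. (\<Sum>x\<in>S. w x * Ch k x) ^ 2)) \<ge> real N ^ 2 / (2 * real (card S))"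
proof -
  define th where "th x = arccos (1 - 2 * x)" for x :: real
  define Mf where "Mf t = (\<Sum>x\<in>S. w x * cos (t * th x))" for t
  have low: "(\<Sum>a<N. \<Sum>b<N. Mf (real a - real b) ^ 2) \<ge> real N ^ 2 / (2 * real (card S))"
    unfolding Mf_def by (rule toep_lower[OF S(1,2) w w1])
  have ev: "Mf (- t) = Mf t" for t unfolding Mf_def by simp
  have M0: "Mf 0 = 1" unfolding Mf_def using w1 by simp
  have Mk: "Mf (real k) = (\<Sum>x\<in>S. w x * Ch k x)" for k
    unfolding Mf_def th_def by (rule sum.cong) (use S(3) in \<open>auto simp: Ch_arccos\<close>)
  have "(\<Sum>a<N. \<Sum>b<N. Mf (real a - real b) ^ 2) \<le> (\<Sum>a<N. Mf 0 ^ 2 + 2 * (\<Sum>k\<in>{1..<N}. Mf (real k) ^ 2))"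
    by (rule sum_mono) (rule toep_upper_row[of Mf, OF ev], simp)
  also have "\<dots> = real N * (1 + 2 * (\<Sum>k\<in>{1..<N}. (\<Sum>x\<in>S. w x * Ch k x) ^ 2))"
    by (simp only: M0 Mk sum_constant) simp
  finally show ?thesis using low by simp
qed

lemma toeplitz_cor:
  assumes S: "finite S" "S \<subseteq> {0..1}" "card S = K" "K \<ge> 1" and w: "\<And>x. x \<in> S \<Longrightarrow> w x \<ge> 0"
    and w1: "(\<Sum>x\<in>S. w x) = 1"
  shows "(\<Sum>k\<in>{1..4*K-2}. (\<Sum>x\<in>S. w x * Ch k x) ^ 2) \<ge> 1/4"
proof -
  have ne: "S \<noteq> {}" using S by auto
  define N where "N = 4 * K - 1"
  have e: "{1..<N} = {1..4*K-2}" unfolding N_def using S(4) by auto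
  define Z where "Z = (\<Sum>k\<in>{1..4*K-2}. (\<Sum>x\<in>S. w x * Ch k x) ^ 2)"
  have "real N * (1 + 2 * Z) \<ge> real N ^ 2 / (2 * real K)"
    using toeplitz[OF S(1) ne S(2) w w1, of N] unfolding e Z_def S(3) .
  moreover have "real N = 4 * real K - 1" unfolding N_def using S(4) by (simp add: of_nat_diff)
  moreover have "real K \<ge> 1" using S(4) by simp
  ultimately have h: "(4 * real K - 1) * (1 + 2 * Z) \<ge> (4 * real K - 1) ^ 2 / (2 * real K)" by simp
  have "1 + 2 * Z \<ge> (4 * real K - 1) / (2 * real K)"
  proof -
    have p: "4 * real K - 1 > 0" using \<open>real K \<ge> 1\<close> by simp
    have "(4 * real K - 1) * ((4 * real K - 1) / (2 * real K)) \<le> (4 * real K - 1) * (1 + 2 * Z)"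
      using h by (simp add: power2_eq_square)
    with p show ?thesis by (simp only: mult_le_cancel_left_pos)
  qed
  moreover have "(4 * real K - 1) / (2 * real K) \<ge> 3/2"
    using \<open>real K \<ge> 1\<close> by (simp add: field_simps)
  ultimately have "1 + 2 * Z \<ge> 3/2" by linarith
  then show ?thesis unfolding Z_def by linarith
qed



lemma sum_odd: "(\<Sum>i<D. 2 * real i + 1) = real D ^ 2"
  by (induction D) (auto simp: power2_eq_square algebra_simps)

lemma lam_lower: assumes "D \<le> n"
  shows "lam n D \<ge> exp (- (real D ^ 2) / (real n - real D + 1))"
proof -
  have pos: "real n - real D + 1 > 0" using assms by simp
  have "(\<Sum>i<D. - (2 * real i + 1) / (real n - real D + 1)) = (\<Sum>i<D. (2 * real i + 1) * (-1 / (real n - real D + 1)))"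
    by (rule sum.cong[OF refl]) (use pos in \<open>simp add: field_simps\<close>)
  also have "\<dots> = (\<Sum>i<D. 2 * real i + 1) * (-1 / (real n - real D + 1))" by (rule sum_distrib_right[symmetric])
  also have "\<dots> = - (real D ^ 2) / (real n - real D + 1)" by (simp add: sum_odd)
  finally have "exp (- (real D ^ 2) / (real n - real D + 1)) = exp (\<Sum>i<D. - (2 * real i + 1) / (real n - real D + 1))"
    by simp
  also have "\<dots> = (\<Prod>i<D. exp (- (2 * real i + 1) / (real n - real D + 1)))" by (rule exp_sum) simp
  also have "\<dots> \<le> lam n D" unfolding lam_def
  proof (rule prod_mono)
    fix i assume "i \<in> {..<D}"
    then have i: "i < D" by simp
    have ni: "real n - real i > 0" using i assms by simp
    define t where "t = (2 * real i + 1) / (real n - real i)"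
    have t0: "t \<ge> 0" unfolding t_def using ni by simp
    have "exp (- (2 * real i + 1) / (real n - real D + 1)) \<le> exp (- t)"
    proof -
      have "real n - real i \<ge> real n - real D + 1" using i by simp
      then have "(2 * real i + 1) / (real n - real D + 1) \<ge> t" unfolding t_def
        using pos by (intro divide_left_mono) auto
      moreover have "- (2 * real i + 1) / (real n - real D + 1) = - ((2 * real i + 1) / (real n - real D + 1))"
        by (rule minus_divide_left[symmetric])
      ultimately have "- (2 * real i + 1) / (real n - real D + 1) \<le> - t" by linarith
      then show ?thesis by (simp only: exp_le_cancel_iff)
    qed
    also have "exp (- t) \<le> 1 / (1 + t)"
    proof -
      have "1 + t \<le> exp t" by (rule exp_ge_add_one_self)
      then show ?thesis using t0 by (simp add: exp_minus field_simps)
    qed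
    also have "1 / (1 + t) = (real n - real i) / (real n + real i + 1)"
      unfolding t_def using ni by (simp add: field_simps)
    finally show "0 \<le> exp (- (2 * real i + 1) / (real n - real D + 1)) \<and>
        exp (- (2 * real i + 1) / (real n - real D + 1)) \<le> (real n - real i) / (real n + real i + 1)" by simp
  qed
  finally show ?thesis .
qed

lemma lam_pos: "D \<le> n \<Longrightarrow> lam n D > 0"
  using lam_lower[of D n] by (meson exp_gt_zero less_le_trans)

lemma lam_mono: assumes "k \<le> D" "D \<le> n" shows "lam n D \<le> lam n k"
  using assms
proof (induction D rule: dec_induct)
  case base then show ?case by simp
next
  case (step m)
  have f: "(real n - real m) / (real n + real m + 1) \<le> 1"
    using step by auto
  have lp: "lam n m > 0" using lam_pos[of m n] step by simp
  have "lam n (Suc m) = lam n m * ((real n - real m) / (real n + real m + 1))" by (simp add: lam_def)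
  also have "\<dots> \<le> lam n m * 1" by (rule mult_left_mono[OF f]) (use lp in simp)
  finally show ?case using step by simp
qed

lemma Ch_01: "x \<in> S \<Longrightarrow> S \<subseteq> {0..1} \<Longrightarrow> 0 \<le> x \<and> x \<le> 1" by auto

lemma chi2_lower:
  assumes di: "discrete_input S w K" and K: "K \<ge> 1" and Dn: "4 * K - 2 \<le> n"
  shows "chi2 n (binom_out n S w) (ref_out n) \<ge> lam n (4 * K - 2) / 2"
proof -
  define D where "D = 4 * K - 2"
  have S: "finite S" "S \<subseteq> {0..1}" "card S = K" and wpos: "\<And>x. x \<in> S \<Longrightarrow> w x > 0" and w1: "(\<Sum>x\<in>S. w x) = 1"
    using di unfolding discrete_input_def by auto
  have Dn': "D \<le> n" unfolding D_def using Dn .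
  define M where "M k = (\<Sum>x\<in>S. w x * Ch k x)" for k
  define h where "h z = (\<Sum>k\<in>{1..D}. M k * Ch k z)" for z
  define f where "f y = Enu (\<lambda>z. h z * bern n y z) / ref_out n y" for y
  define P where "P = binom_out n S w"
  define Q where "Q = ref_out n"
  have hc: "continuous_on UNIV h" unfolding h_def by (auto intro!: continuous_intros Ch_cont)
  have Qpos: "y \<le> n \<Longrightarrow> Q y > 0" for y unfolding Q_def by (rule ref_out_pos)
  have P_eq: "P y = (\<Sum>x\<in>S. w x * bern n y x)" for y unfolding P_def binom_out_def bern_def by simp
  have Bh: "Bop n h x = (\<Sum>k\<in>{1..D}. M k * lam n k * Ch k x)" if "0 \<le> x" "x \<le> 1" for x
  proof -
    have "Bop n h x = (\<Sum>k\<in>{1..D}. Bop n (\<lambda>z. M k * Ch k z) x)"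
      unfolding h_def by (rule Bop_sum) (auto intro!: continuous_intros Ch_cont)
    also have "\<dots> = (\<Sum>k\<in>{1..D}. M k * lam n k * Ch k x)"
      by (simp add: Bop_cmult Bop_Ch[OF that] mult.assoc)
    finally show ?thesis .
  qed
  have EQ: "(\<Sum>y\<le>n. Q y * f y) = 0"
  proof -
    have "(\<Sum>y\<le>n. Q y * f y) = (\<Sum>y\<le>n. Enu (\<lambda>z. h z * bern n y z))"
      unfolding f_def Q_def by (rule sum.cong) (auto simp: ref_out_nz)
    also have "\<dots> = Enu (\<lambda>z. \<Sum>y\<le>n. h z * bern n y z)"
      by (rule Enu_sum[symmetric]) (auto intro!: continuous_intros hc bern_cont)
    also have "\<dots> = Enu h" by (simp add: bern_sum1 flip: sum_distrib_left)
    also have "\<dots> = (\<Sum>k\<in>{1..D}. Enu (\<lambda>z. M k * Ch k z))"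
      unfolding h_def by (rule Enu_sum) (auto intro!: continuous_intros Ch_cont)
    also have "\<dots> = 0" by (simp add: Enu_cmult Enu_Ch)
    finally show ?thesis .
  qed
  define T where "T = (\<Sum>k\<in>{1..D}. lam n k * M k ^ 2)"
  have EP: "(\<Sum>y\<le>n. P y * f y) = T"
  proof -
    have "(\<Sum>y\<le>n. P y * f y) = (\<Sum>y\<le>n. \<Sum>x\<in>S. w x * (bern n y x * f y))"
      unfolding P_eq by (simp add: sum_distrib_right mult.assoc)
    also have "\<dots> = (\<Sum>x\<in>S. \<Sum>y\<le>n. w x * (bern n y x * f y))" by (rule sum.swap)
    also have "\<dots> = (\<Sum>x\<in>S. w x * Bop n h x)"
      unfolding Bop_def f_def by (simp add: sum_distrib_left)
    also have "\<dots> = (\<Sum>x\<in>S. w x * (\<Sum>k\<in>{1..D}. M k * lam n k * Ch k x))"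
      by (rule sum.cong) (use S(2) in \<open>auto simp: Bh\<close>)
    also have "\<dots> = (\<Sum>k\<in>{1..D}. M k * lam n k * (\<Sum>x\<in>S. w x * Ch k x))"
      by (simp add: sum_distrib_left sum.swap[of _ S] mult_ac)
    also have "\<dots> = T" unfolding T_def M_def by (simp add: power2_eq_square mult_ac)
    finally show ?thesis .
  qed
  have EQ2: "(\<Sum>y\<le>n. Q y * f y ^ 2) = T / 2"
  proof -
    have "(\<Sum>y\<le>n. Q y * f y ^ 2) = (\<Sum>y\<le>n. Enu (\<lambda>z. h z * bern n y z) * Enu (\<lambda>z. h z * bern n y z) / ref_out n y)"
      unfolding f_def Q_def by (rule sum.cong) (auto simp: power2_eq_square ref_out_nz)
    also have "\<dots> = Enu (\<lambda>x. h x * Bop n h x)" by (rule Bop_selfadj[OF hc, symmetric])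
    also have "\<dots> = Enu (\<lambda>x. \<Sum>l\<in>{1..D}. \<Sum>k\<in>{1..D}. (M l * M k * lam n k) * (Ch l x * Ch k x))"
      by (rule Enu_cong) (simp add: Bh h_def sum_distrib_left sum_distrib_right mult_ac, subst sum.swap, simp add: mult_ac)
    also have "\<dots> = (\<Sum>l\<in>{1..D}. \<Sum>k\<in>{1..D}. (M l * M k * lam n k) * Enu (\<lambda>x. Ch l x * Ch k x))"
      by (simp add: Enu_sum Enu_cmult continuous_intros Ch_cont)
    also have "\<dots> = (\<Sum>l\<in>{1..D}. M l * M l * lam n l * (1/2))"
      by (simp add: Enu_Ch_Ch if_distrib sum.delta cong: if_cong)
    also have "\<dots> = T / 2" unfolding T_def by (simp add: power2_eq_square sum_divide_distrib mult_ac)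
    finally show ?thesis .
  qed
  have lamD: "lam n D > 0" by (rule lam_pos[OF Dn'])
  have T_ge: "T \<ge> lam n D / 4"
  proof -
    have "T \<ge> (\<Sum>k\<in>{1..D}. lam n D * M k ^ 2)" unfolding T_def
      by (rule sum_mono) (auto intro!: mult_right_mono lam_mono Dn')
    moreover have "(\<Sum>k\<in>{1..D}. lam n D * M k ^ 2) = lam n D * (\<Sum>k\<in>{1..D}. M k ^ 2)"
      by (simp add: sum_distrib_left)
    moreover have "(\<Sum>k\<in>{1..D}. M k ^ 2) \<ge> 1/4"
      unfolding M_def D_def by (rule toeplitz_cor[OF S K]) (use wpos w1 in \<open>auto simp: less_imp_le\<close>)
    ultimately show ?thesis using lamD
      by (metis (no_types, lifting) dual_order.trans mult_left_mono less_imp_le mult.commute mult_1_right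
           divide_real_def inverse_eq_divide times_divide_eq_right)
  qed
  have CS: "(\<Sum>y\<le>n. (P y - Q y) * f y) ^ 2 \<le> chi2 n P Q * (\<Sum>y\<le>n. Q y * f y ^ 2)"
  proof -
    have "(\<Sum>y\<le>n. ((P y - Q y) / sqrt (Q y)) * (sqrt (Q y) * f y)) ^ 2 \<le>
        (\<Sum>y\<le>n. ((P y - Q y) / sqrt (Q y)) ^ 2) * (\<Sum>y\<le>n. (sqrt (Q y) * f y) ^ 2)"
      by (rule Cauchy_Schwarz_ineq_sum)
    moreover have "(\<Sum>y\<le>n. ((P y - Q y) / sqrt (Q y)) * (sqrt (Q y) * f y)) = (\<Sum>y\<le>n. (P y - Q y) * f y)"
      by (rule sum.cong) (auto dest!: Qpos)
    moreover have "(\<Sum>y\<le>n. ((P y - Q y) / sqrt (Q y)) ^ 2) = chi2 n P Q"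
      unfolding chi2_def atLeast0AtMost by (rule sum.cong) (auto dest!: Qpos simp: power_divide less_imp_le)
    moreover have "(\<Sum>y\<le>n. (sqrt (Q y) * f y) ^ 2) = (\<Sum>y\<le>n. Q y * f y ^ 2)"
      by (rule sum.cong) (auto dest!: Qpos simp: power_mult_distrib less_imp_le)
    ultimately show ?thesis by simp
  qed
  have "(\<Sum>y\<le>n. (P y - Q y) * f y) = T"
    using EP EQ by (simp add: left_diff_distrib sum_subtractf)
  with CS EQ2 have "T ^ 2 \<le> chi2 n P Q * (T / 2)" by simp
  moreover have "T > 0" using T_ge lamD by simp
  ultimately have "2 * T \<le> chi2 n P Q" by (simp add: power2_eq_square field_simps)
  then show ?thesis using T_ge unfolding P_def Q_def D_def by simp
qed



lemma part1:
  assumes n: "n \<ge> 1" and K: "K \<ge> 1" and di: "discrete_input S w K" and u: "0 < u" "u < 1/4"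
    and chi: "chi2 n (binom_out n S w) (ref_out n) \<le> u"
  shows "real K > (real n + 2) / 4 \<or>
    real K \<ge> (4 - ln (1 / (4 * u)) + sqrt (ln (1 / (4 * u)) * (4 * real n + ln (1 / (4 * u)) + 4))) / 8"
proof (cases "real K > (real n + 2) / 4")
  case True then show ?thesis by simp
next
  case False
  define a where "a = ln (1 / (4 * u))"
  have a0: "a > 0" unfolding a_def using u by simp
  have "4 * real K \<le> real n + 2" using False by simp
  then have Kn: "4 * K \<le> n + 2" by linarith
  define D where "D = 4 * K - 2"
  have Dn: "D \<le> n" unfolding D_def using Kn by simp
  have rD: "real D = 4 * real K - 2" unfolding D_def using K by (simp add: of_nat_diff)
  define E where "E = real D ^ 2 / (real n - real D + 1)"
  have c0: "real n - real D + 1 > 0" using Dn by simp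
  have "chi2 n (binom_out n S w) (ref_out n) \<ge> lam n D / 2"
    unfolding D_def by (rule chi2_lower[OF di K]) (use Dn in \<open>simp add: D_def\<close>)
  moreover have "lam n D \<ge> exp (- E)"
  proof -
    have "- (real D ^ 2) / (real n - real D + 1) = - E" unfolding E_def by (rule minus_divide_left[symmetric])
    then show ?thesis using lam_lower[OF Dn] by simp
  qed
  ultimately have uE: "u \<ge> exp (- E) / 2" using chi by simp
  have aE: "a \<le> E"
  proof -
    have "1 / (4 * u) \<le> 1 / (2 * exp (- E))"
      using uE u by (intro divide_left_mono) (auto intro: mult_pos_pos)
    also have "\<dots> = exp E / 2" by (simp add: exp_minus field_simps)
    finally have "a \<le> ln (exp E / 2)" unfolding a_def using u by (subst ln_le_cancel_iff) auto
    also have "ln (exp E / 2) = E - ln 2" by (simp add: ln_div)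
    finally have "a \<le> E - ln 2" .
    moreover have "ln (2::real) \<ge> 0" by simp
    ultimately show ?thesis by linarith
  qed
  have key: "a * (real n + 3 - 4 * real K) \<le> (4 * real K - 2) ^ 2"
  proof -
    have "a * (real n - real D + 1) \<le> E * (real n - real D + 1)" by (rule mult_right_mono[OF aE]) (use c0 in simp)
    also have "\<dots> = real D ^ 2" unfolding E_def using c0 by simp
    finally show ?thesis unfolding rD by (simp add: algebra_simps)
  qed
  have "sqrt (a * (4 * real n + a + 4)) \<le> 8 * real K - 4 + a"
  proof -
    have nn: "8 * real K - 4 + a \<ge> 0" using K a0 by simp
    have "a * (4 * real n + a + 4) \<le> (8 * real K - 4 + a) ^ 2"
      using key by (simp add: power2_eq_square algebra_simps)
    then have "sqrt (a * (4 * real n + a + 4)) \<le> sqrt ((8 * real K - 4 + a) ^ 2)" by (rule real_sqrt_le_mono)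
    also have "\<dots> = 8 * real K - 4 + a" using nn by simp
    finally show ?thesis .
  qed
  then show ?thesis unfolding a_def[symmetric] by simp
qed

lemma disj_bound1:
  fixes x a k :: real
  assumes x: "x \<ge> 1" and a: "a > 0"
    and d: "k > (x + 2) / 4 \<or> k \<ge> (4 - a + sqrt (a * (4 * x + a + 4))) / 8"
  shows "k \<ge> sqrt x * min (sqrt x / 8) (sqrt a / 8)"
proof -
  have sx: "sqrt x * sqrt x = x" using x by simp
  have sa: "sqrt a * sqrt a = a" using a by simp
  have sxp: "sqrt x \<ge> 0" using x by simp
  have le1: "sqrt x * min (sqrt x / 8) (sqrt a / 8) \<le> x / 8"
    using mult_left_mono[OF min.cobounded1[of "sqrt x / 8" "sqrt a / 8"] sxp] sx by simp
  have le2: "sqrt x * min (sqrt x / 8) (sqrt a / 8) \<le> sqrt x * sqrt a / 8"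
    using mult_left_mono[OF min.cobounded2[of "sqrt x / 8" "sqrt a / 8"] sxp] by simp
  show ?thesis
  proof (cases "k > (x + 2) / 4")
    case True then show ?thesis using le1 x by simp
  next
    case False
    then have kb: "k \<ge> (4 - a + sqrt (a * (4 * x + a + 4))) / 8" using d by simp
    show ?thesis
    proof (cases "a \<ge> x")
      case True
      have "(a + x) ^ 2 \<le> a * (4 * x + a + 4)"
      proof -
        have h1: "x * x \<le> a * x" using True x by (intro mult_right_mono) auto
        have h2: "0 \<le> a * x" using a x by simp
        have e1: "(a + x) ^ 2 = a * a + 2 * (a * x) + x * x" by (simp add: power2_eq_square algebra_simps)
        have e2: "a * (4 * x + a + 4) = 4 * (a * x) + a * a + 4 * a" by (simp add: algebra_simps)
        show ?thesis unfolding e1 e2 using h1 h2 a by linarith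
      qed
      then have "sqrt ((a + x) ^ 2) \<le> sqrt (a * (4 * x + a + 4))" by (rule real_sqrt_le_mono)
      moreover have "sqrt ((a + x) ^ 2) = a + x" using a x by simp
      ultimately have "k \<ge> (4 + x) / 8" using kb by simp
      then show ?thesis using le1 by simp
    next
      case False
      have "sqrt (4 * x * a) \<le> sqrt (a * (4 * x + a + 4))" by (rule real_sqrt_le_mono) (use a in \<open>simp add: algebra_simps\<close>)
      moreover have "sqrt (4 * x * a) = 2 * (sqrt x * sqrt a)" by (simp add: real_sqrt_mult)
      moreover have "a \<le> sqrt x * sqrt a"
      proof -
        have "sqrt a * sqrt a \<le> sqrt x * sqrt a" using False a by (intro mult_right_mono) auto
        then show ?thesis using sa by simp
      qed
      ultimately have "k \<ge> sqrt x * sqrt a / 8" using kb by simp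
      then show ?thesis using le2 by simp
    qed
  qed
qed

lemma disj_bound2:
  fixes x a k :: real
  assumes x: "x \<ge> 1" and a: "a > 0" and ax: "a \<le> x"
    and d: "k > (x + 2) / 4 \<or> k \<ge> (4 - a + sqrt (a * (4 * x + a + 4))) / 8"
  shows "k \<ge> sqrt (x * a) / 4 - a / 8"
proof (cases "k > (x + 2) / 4")
  case True
  have "sqrt (x * a) \<le> sqrt (x * x)" by (rule real_sqrt_le_mono) (use ax x in \<open>intro mult_left_mono, auto\<close>)
  also have "\<dots> = x" using x by simp
  finally show ?thesis using True a by simp
next
  case False
  then have kb: "k \<ge> (4 - a + sqrt (a * (4 * x + a + 4))) / 8" using d by simp
  have "sqrt (4 * (x * a)) \<le> sqrt (a * (4 * x + a + 4))" by (rule real_sqrt_le_mono) (use a in \<open>simp add: algebra_simps\<close>)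
  moreover have "sqrt (4 * (x * a)) = 2 * sqrt (x * a)" by (simp add: real_sqrt_mult)
  ultimately show ?thesis using kb by simp
qed



theorem proposition4:
  shows
  "(\<forall>(n::nat) (S::real set) (w::real \<Rightarrow> real) (K::nat) (u::real).
      n \<ge> 1 \<longrightarrow> K \<ge> 1 \<longrightarrow> discrete_input S w K \<longrightarrow> 0 < u \<longrightarrow> u < 1/4 \<longrightarrow>
      chi2 n (binom_out n S w) (ref_out n) \<le> u \<longrightarrow>
      (let \<alpha> = ln (1 / (4 * u)) in
         real K > (real n + 2) / 4 \<or>
         real K \<ge> (4 - \<alpha> + sqrt (\<alpha> * (4 * real n + \<alpha> + 4))) / 8))
   \<and>
   (\<forall>(S::nat \<Rightarrow> real set) (w::nat \<Rightarrow> real \<Rightarrow> real) (K::nat \<Rightarrow> nat) (u::nat \<Rightarrow> real).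
      (\<forall>n\<ge>1. K n \<ge> 1 \<and> discrete_input (S n) (w n) (K n) \<and> 0 < u n \<and> u n < 1/4 \<and>
              chi2 n (binom_out n (S n) (w n)) (ref_out n) \<le> u n) \<longrightarrow>
      filterlim (\<lambda>n. ln (1 / (4 * u n))) at_top sequentially \<longrightarrow>
      filterlim (\<lambda>n. real (K n) / sqrt (real n)) at_top sequentially \<and>
      ((\<lambda>n. ln (1 / (4 * u n))) \<in> o(\<lambda>n. real n) \<longrightarrow>
        (\<exists>e::nat \<Rightarrow> real. e \<longlonglongrightarrow> 0 \<and>
           (\<forall>\<^sub>F n in sequentially.
              real (K n) \<ge> 1/4 * sqrt (real n * ln (1 / (4 * u n))) * (1 + e n)))))"
proof (intro conjI allI impI)
  fix n :: nat and S :: "real set" and w :: "real \<Rightarrow> real" and K :: nat and u :: real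
  assume "n \<ge> 1" "K \<ge> 1" "discrete_input S w K" "0 < u" "u < 1/4"
    "chi2 n (binom_out n S w) (ref_out n) \<le> u"
  from part1[OF this] show "let \<alpha> = ln (1 / (4 * u)) in
         real K > (real n + 2) / 4 \<or>
         real K \<ge> (4 - \<alpha> + sqrt (\<alpha> * (4 * real n + \<alpha> + 4))) / 8"
    unfolding Let_def .
next
  fix S :: "nat \<Rightarrow> real set" and w :: "nat \<Rightarrow> real \<Rightarrow> real" and K :: "nat \<Rightarrow> nat" and u :: "nat \<Rightarrow> real"
  assume H: "\<forall>n\<ge>1. K n \<ge> 1 \<and> discrete_input (S n) (w n) (K n) \<and> 0 < u n \<and> u n < 1/4 \<and>
              chi2 n (binom_out n (S n) (w n)) (ref_out n) \<le> u n"
  define al where "al n = ln (1 / (4 * u n))" for n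
  assume A0: "filterlim (\<lambda>n. ln (1 / (4 * u n))) at_top sequentially"
  then have A: "filterlim al at_top sequentially" unfolding al_def .
  have disj: "real (K n) > (real n + 2) / 4 \<or>
      real (K n) \<ge> (4 - al n + sqrt (al n * (4 * real n + al n + 4))) / 8" if "n \<ge> 1" for n
    unfolding al_def using part1[of n "K n" "S n" "w n" "u n"] H that by blast
  have alpos: "al n > 0" if "n \<ge> 1" for n
  proof -
    have "0 < u n" "u n < 1/4" using H that by auto
    then show ?thesis unfolding al_def by simp
  qed
  have evn: "\<forall>\<^sub>F n in sequentially. c \<le> real n" for c
    using filterlim_real_sequentially unfolding filterlim_at_top by blast
  have eva: "\<forall>\<^sub>F n in sequentially. c \<le> al n" for c
    using A unfolding filterlim_at_top by blast
  show "filterlim (\<lambda>n. real (K n) / sqrt (real n)) at_top sequentially"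
    unfolding filterlim_at_top
  proof
    fix Z :: real
    have "\<forall>\<^sub>F n in sequentially. max 1 ((8 * Z) ^ 2) \<le> real n \<and> (8 * Z) ^ 2 \<le> al n"
      by (intro eventually_conj evn eva)
    then show "\<forall>\<^sub>F n in sequentially. Z \<le> real (K n) / sqrt (real n)"
    proof (rule eventually_mono)
      fix n assume n: "max 1 ((8 * Z) ^ 2) \<le> real n \<and> (8 * Z) ^ 2 \<le> al n"
      then have n1: "n \<ge> 1" by simp
      have sn: "sqrt (real n) > 0" using n1 by simp
      have b: "real (K n) \<ge> sqrt (real n) * min (sqrt (real n) / 8) (sqrt (al n) / 8)"
        by (rule disj_bound1) (use n1 alpos[OF n1] disj[OF n1] in auto)
      then have b': "real (K n) / sqrt (real n) \<ge> min (sqrt (real n) / 8) (sqrt (al n) / 8)"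
        using sn by (simp add: field_simps)
      show "Z \<le> real (K n) / sqrt (real n)"
      proof (cases "Z \<le> 0")
        case True
        moreover have "real (K n) / sqrt (real n) \<ge> 0" using sn by simp
        ultimately show ?thesis by linarith
      next
        case False
        have q: "sqrt ((8 * Z) ^ 2) = 8 * Z" by (simp only: real_sqrt_abs) (use False in simp)
        have "sqrt ((8 * Z) ^ 2) \<le> sqrt (real n)" using n by (intro real_sqrt_le_mono) simp
        then have z1: "8 * Z \<le> sqrt (real n)" by (simp only: q)
        have "sqrt ((8 * Z) ^ 2) \<le> sqrt (al n)" using n by (intro real_sqrt_le_mono) simp
        then have z2: "8 * Z \<le> sqrt (al n)" by (simp only: q)
        have "Z \<le> min (sqrt (real n) / 8) (sqrt (al n) / 8)" using z1 z2 by simp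
        then show ?thesis using b' by linarith
      qed
    qed
  qed
  assume O0: "(\<lambda>n. ln (1 / (4 * u n))) \<in> o(\<lambda>n. real n)"
  then have O: "al \<in> o(\<lambda>n. real n)" unfolding al_def .
  have T: "(\<lambda>n. al n / real n) \<longlonglongrightarrow> 0" using smalloD_tendsto[OF O] .
  define e where "e n = - sqrt (al n / real n) / 2" for n
  have eT: "e \<longlonglongrightarrow> 0"
  proof -
    have "(\<lambda>n. - sqrt (al n / real n) / 2) \<longlonglongrightarrow> - sqrt 0 / 2"
      by (intro tendsto_intros T) auto
    then show ?thesis unfolding e_def by simp
  qed
  have ev1: "\<forall>\<^sub>F n in sequentially. al n / real n < 1" using order_tendstoD(2)[OF T] by simp
  have "\<forall>\<^sub>F n in sequentially. real (K n) \<ge> 1/4 * sqrt (real n * al n) * (1 + e n)"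
    using eventually_conj[OF ev1 evn[of 1]]
  proof (rule eventually_mono)
    fix n assume n: "al n / real n < 1 \<and> 1 \<le> real n"
    then have n1: "n \<ge> 1" by simp
    have np: "real n > 0" using n1 by simp
    have a0: "al n > 0" using alpos[OF n1] .
    have ax: "al n \<le> real n" using n np by (simp add: field_simps)
    have kb: "real (K n) \<ge> sqrt (real n * al n) / 4 - al n / 8"
      by (rule disj_bound2) (use n1 a0 ax disj[OF n1] in auto)
    have "sqrt (real n * al n) * sqrt (al n / real n) = sqrt (real n * al n * (al n / real n))"
      by (rule real_sqrt_mult[symmetric])
    also have "real n * al n * (al n / real n) = al n ^ 2" using np by (simp add: power2_eq_square field_simps)
    finally have "sqrt (real n * al n) * sqrt (al n / real n) = al n" using a0 by simp
    then have "1/4 * sqrt (real n * al n) * (1 + e n) = sqrt (real n * al n) / 4 - al n / 8"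
      unfolding e_def by (simp add: algebra_simps)
    then show "real (K n) \<ge> 1/4 * sqrt (real n * al n) * (1 + e n)" using kb by simp
  qed
  then show "\<exists>e::nat \<Rightarrow> real. e \<longlonglongrightarrow> 0 \<and>
           (\<forall>\<^sub>F n in sequentially.
              real (K n) \<ge> 1/4 * sqrt (real n * ln (1 / (4 * u n))) * (1 + e n))"
    using eT unfolding al_def by blast
qed



end
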